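(* Let $G_0$ be the group of homeomorphisms of $\mathbb{R}$ defined in the context. The center of $G_0$ is trivial.
   Context: $G_0$ is the group of homeomorphisms of $\mathbb{R}$ generated by the following maps: - $a(t)=t+1$; - $b$, where $b(t)=t$ for $t\le 0$, $b(t)=t/(1-t)$ for $0\le t\le 1/2$, $b(t)=(3t-1)/t$ for $1/2\le t\le 1$, and $b(t)=t+1$ for $t\ge 1$; - $c$, where $c(t)=2t/(t+1)$ for $0\le t\le 1$ and $c(t)=t$ otherwise. *)

theory Defs
  imports Complex_Main
begin

definition ga :: "real \<Rightarrow> real" where
  "ga t = t + 1"

definition gb :: "real \<Rightarrow> real" where
  "gb t = (if t \<le> 0 then t
           else if t \<le> 1/2 then t / (1 - t)
           else if t \<le> 1 then (3 * t - 1) / t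
           else t + 1)"

definition gc :: "real \<Rightarrow> real" where
  "gc t = (if 0 \<le> t \<and> t \<le> 1 then 2 * t / (t + 1) else t)"

inductive_set G0 :: "(real \<Rightarrow> real) set" where
  G0_id: "id \<in> G0"
| G0_gen: "g \<in> G0 \<Longrightarrow> s \<in> {ga, gb, gc} \<Longrightarrow> s \<circ> g \<in> G0"
| G0_geninv: "g \<in> G0 \<Longrightarrow> s \<in> {ga, gb, gc} \<Longrightarrow> inv s \<circ> g \<in> G0"

definition center_G0 :: "(real \<Rightarrow> real) set" where
  "center_G0 = {g \<in> G0. \<forall>h \<in> G0. g \<circ> h = h \<circ> g}"

end

theory Submission
  imports Defs
begin

lemma gb_le0: "t \<le> 0 \<Longrightarrow> gb t = t" by (simp add: gb_def)

lemma ga_inj: "inj ga" by (rule injI) (simp add: ga_def)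
lemma ga_surj: "surj ga"
  by (rule surjI[of _ "\<lambda>y. y - 1"]) (simp add: ga_def)

lemma gb_range1: "0 < t \<Longrightarrow> t \<le> 1/2 \<Longrightarrow> 0 < gb t \<and> gb t \<le> 1"
  by (auto simp: gb_def field_simps)
lemma gb_range2: "1/2 < t \<Longrightarrow> t \<le> 1 \<Longrightarrow> 1 < gb t \<and> gb t \<le> 2"
  by (auto simp: gb_def field_simps)

lemma gb_mono: "x < y \<Longrightarrow> gb x < gb y"
proof -
  assume xy: "x < y"
  consider "y \<le> 0" | "0 < y" "y \<le> 1/2" | "1/2 < y" "y \<le> 1" | "1 < y" by linarith
  then show ?thesis
  proof cases
    case 1 then show ?thesis using xy by (simp add: gb_def)
  next
    case 2
    show ?thesis
    proof (cases "x \<le> 0")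
      case True then show ?thesis using gb_range1[OF 2] by (simp add: gb_def)
    next
      case False
      have "x / (1 - x) < y / (1 - y)" using 2 False xy by (simp add: field_simps)
      then show ?thesis using 2 False xy by (simp add: gb_def)
    qed
  next
    case 3
    show ?thesis
    proof (cases "x \<le> 1/2")
      case True
      have "gb x \<le> 1"
      proof (cases "x \<le> 0")
        case True then show ?thesis by (simp add: gb_def)
      next
        case False then show ?thesis using gb_range1[of x] \<open>x \<le> 1/2\<close> by linarith
      qed
      then show ?thesis using gb_range2[OF 3] by simp
    next
      case False
      have "(3*x - 1) / x < (3*y-1) / y" using 3 False xy by (simp add: field_simps)
      then show ?thesis using 3 False xy by (simp add: gb_def)
    qed
  next
    case 4
    show ?thesis
    proof (cases "x \<le> 1")
      case True
      have "gb x \<le> 2"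
      proof -
        consider "x \<le> 0" | "0 < x" "x \<le> 1/2" | "1/2 < x" by linarith
        then show ?thesis
        proof cases
          case 1 then show ?thesis by (simp add: gb_def)
        next
          case 2 then show ?thesis using gb_range1[of x] by linarith
        next
          case 3 then show ?thesis using gb_range2[of x] True by linarith
        qed
      qed
      then show ?thesis using 4 by (simp add: gb_def)
    next
      case False then show ?thesis using 4 xy by (simp add: gb_def)
    qed
  qed
qed

lemma gb_surj: "surj gb"
proof -
  have "\<exists>x. gb x = y" for y
  proof -
    consider "y \<le> 0" | "0 < y" "y \<le> 1" | "1 < y" "y \<le> 2" | "2 < y" by linarith
    then show ?thesis
    proof cases
      case 1 then show ?thesis by (intro exI[of _ y]) (simp add: gb_def)
    next
      case 2
      have "gb (y/(1+y)) = y" using 2 by (simp add: gb_def field_simps)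
      then show ?thesis by blast
    next
      case 3
      show ?thesis
      proof (cases "y = 1")
        case True
        have "gb (1/2) = 1" by (simp add: gb_def)
        then show ?thesis using True by blast
      next
        case False
        have "gb (1/(3-y)) = y" using 3 False by (simp add: gb_def field_simps)
        then show ?thesis by blast
      qed
    next
      case 4 then show ?thesis by (intro exI[of _ "y-1"]) (simp add: gb_def)
    qed
  qed
  then show ?thesis by (metis surj_def)
qed

lemma gc_mono: "x < y \<Longrightarrow> gc x < gc y"
proof -
  assume xy: "x < y"
  have r: "0 \<le> t \<Longrightarrow> t \<le> 1 \<Longrightarrow> 0 \<le> 2*t/(t+1) \<and> 2*t/(t+1) \<le> 1" for t :: real
    by (simp add: field_simps)
  consider "y < 0" | "0 \<le> y" "y \<le> 1" | "1 < y" by linarith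
  then show ?thesis
  proof cases
    case 1 then show ?thesis using xy by (simp add: gc_def)
  next
    case 2
    show ?thesis
    proof (cases "x < 0")
      case True
      have "0 \<le> 2*y/(y+1)" using r[OF 2] by simp
      moreover have "gc x = x" "gc y = 2*y/(y+1)" using 2 True by (auto simp: gc_def)
      ultimately show ?thesis using True by linarith
    next
      case False
      have "2*x/(x+1) < 2*y/(y+1)" using 2 False xy by (simp add: field_simps)
      then show ?thesis using 2 False xy by (simp add: gc_def)
    qed
  next
    case 3
    show ?thesis
    proof (cases "x \<le> 1")
      case True
      have "gc x \<le> 1"
      proof (cases "x < 0")
        case True then show ?thesis by (simp add: gc_def)
      next
        case False then show ?thesis using r[of x] \<open>x \<le> 1\<close> by (simp add: gc_def)
      qed
      then show ?thesis using 3 by (simp add: gc_def)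
    next
      case False then show ?thesis using 3 xy by (simp add: gc_def)
    qed
  qed
qed

lemma gc_surj: "surj gc"
proof -
  have "\<exists>x. gc x = y" for y
  proof (cases "0 \<le> y \<and> y \<le> 1")
    case True
    have "gc (y/(2-y)) = y" using True by (simp add: gc_def field_simps)
    then show ?thesis by blast
  next
    case False then show ?thesis by (intro exI[of _ y]) (auto simp: gc_def)
  qed
  then show ?thesis by (metis surj_def)
qed

lemma ga_mono: "x < y \<Longrightarrow> ga x < ga y" by (simp add: ga_def)

lemma inv_mono:
  fixes f :: "real \<Rightarrow> real"
  assumes m: "\<And>x y. x < y \<Longrightarrow> f x < f y" and s: "surj f" and xy: "x < y"
  shows "inv f x < inv f y"
proof (rule ccontr)
  assume "\<not> inv f x < inv f y"
  then have "inv f y \<le> inv f x" by simp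
  then have "f (inv f y) \<le> f (inv f x)"
    using m by (cases "inv f y = inv f x") (auto simp: less_imp_le)
  then show False using xy s by (simp add: surj_f_inv_f)
qed

lemma gen_mono: "s \<in> {ga, gb, gc} \<Longrightarrow> x < y \<Longrightarrow> s x < s y"
  using ga_mono gb_mono gc_mono by auto

lemma gen_surj: "s \<in> {ga, gb, gc} \<Longrightarrow> surj s"
  using ga_surj gb_surj gc_surj by auto

lemma G0_mono: "h \<in> G0 \<Longrightarrow> x < y \<Longrightarrow> h x < h y"
proof (induction h arbitrary: x y rule: G0.induct)
  case G0_id then show ?case by simp
next
  case (G0_gen g s) then show ?case using gen_mono by simp
next
  case (G0_geninv g s)
  have "g x < g y" using G0_geninv by simp
  moreover have "\<And>a b. a < b \<Longrightarrow> s a < s b" using gen_mono G0_geninv.hyps(2) by blast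
  ultimately have "inv s (g x) < inv s (g y)"
    using inv_mono[of s] gen_surj[OF G0_geninv.hyps(2)] by blast
  then show ?case by simp
qed

definition orb :: "real set" where "orb = {h 0 | h. h \<in> G0}"

lemma orb_0: "0 \<in> orb" unfolding orb_def
  by (rule CollectI, rule exI[of _ id]) (simp add: G0.G0_id)

lemma orb_gen: "y \<in> orb \<Longrightarrow> s \<in> {ga,gb,gc} \<Longrightarrow> s y \<in> orb"
proof -
  assume "y \<in> orb" "s \<in> {ga,gb,gc}"
  then obtain h where "y = h 0" "h \<in> G0" unfolding orb_def by blast
  then have "s y = (s \<circ> h) 0" "s \<circ> h \<in> G0" using G0.G0_gen \<open>s \<in> _\<close> by auto
  then show ?thesis unfolding orb_def by blast
qed

lemma orb_geninv: "y \<in> orb \<Longrightarrow> s \<in> {ga,gb,gc} \<Longrightarrow> inv s y \<in> orb"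
proof -
  assume "y \<in> orb" "s \<in> {ga,gb,gc}"
  then obtain h where "y = h 0" "h \<in> G0" unfolding orb_def by blast
  then have "inv s y = (inv s \<circ> h) 0" "inv s \<circ> h \<in> G0" using G0.G0_geninv \<open>s \<in> _\<close> by auto
  then show ?thesis unfolding orb_def by blast
qed

lemma orb_plus: "y \<in> orb \<Longrightarrow> y + 1 \<in> orb"
  using orb_gen[of y ga] by (simp add: ga_def)

lemma orb_minus: "y \<in> orb \<Longrightarrow> y - 1 \<in> orb"
proof -
  assume "y \<in> orb"
  moreover have "inv ga y = y - 1" by (rule inv_f_eq[OF ga_inj]) (simp add: ga_def)
  ultimately show ?thesis using orb_geninv[of y ga] by simp
qed

lemma orb_f1: "y \<in> orb \<Longrightarrow> 0 \<le> y \<Longrightarrow> y \<le> 1 \<Longrightarrow> y/(1+y) \<in> orb"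
proof -
  assume a: "y \<in> orb" "0 \<le> y" "y \<le> 1"
  have "gb (y/(1+y)) = y" using a by (simp add: gb_def field_simps)
  then have "inv gb y = y/(1+y)"
    by (intro inv_f_eq) (auto intro: strict_mono_imp_inj_on simp: strict_mono_def gb_mono)
  then show ?thesis using orb_geninv[of y gb] a by simp
qed

lemma orb_f2: "y \<in> orb \<Longrightarrow> 0 \<le> y \<Longrightarrow> y \<le> 1 \<Longrightarrow> 1/(2-y) \<in> orb"
proof -
  assume a: "y \<in> orb" "0 \<le> y" "y \<le> 1"
  have "gb (1/(2-y)) = y + 1"
  proof (cases "y = 0")
    case True then show ?thesis by (simp add: gb_def)
  next
    case False then show ?thesis using a by (simp add: gb_def field_simps)
  qed
  then have "inv gb (y+1) = 1/(2-y)"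
    by (intro inv_f_eq) (auto intro: strict_mono_imp_inj_on simp: strict_mono_def gb_mono)
  then show ?thesis using orb_geninv[of "y+1" gb] orb_plus[OF a(1)] by simp
qed

lemma orb_rat: "\<forall>p. p \<le> q \<longrightarrow> 0 < q \<longrightarrow> real p / real q \<in> orb"
proof (induction q rule: less_induct)
  case (less q)
  show ?case
  proof (intro allI impI)
    fix p assume pq: "p \<le> q" and q: "0 < q"
    show "real p / real q \<in> orb"
    proof (cases "p = 0")
      case True then show ?thesis using orb_0 by simp
    next
      case p0: False
      show ?thesis
      proof (cases "p = q")
        case True then show ?thesis using orb_plus[OF orb_0] q by simp
      next
        case False
        then have pq': "p < q" using pq by simp
        show ?thesis
        proof (cases "2*p \<le> q")
          case True
          have "real p / real (q-p) \<in> orb" using less.IH[of "q-p"] p0 pq' True by auto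
          moreover have "real p / real (q-p) \<le> 1" using True pq' by (simp add: field_simps)
          ultimately have "(real p / real (q-p)) / (1 + real p / real (q-p)) \<in> orb"
            by (intro orb_f1) auto
          moreover have "(real p / real (q-p)) / (1 + real p / real (q-p)) = real p / real q"
            using pq' by (simp add: field_simps of_nat_diff)
          ultimately show ?thesis by metis
        next
          case False
          have "2*p-q \<le> p" using pq' by simp
          then have "real (2*p-q) / real p \<in> orb" using less.IH[of p] p0 pq' by blast
          moreover have "real (2*p-q) / real p \<le> 1" using p0 pq' by (simp add: field_simps)
          ultimately have "1 / (2 - real (2*p-q) / real p) \<in> orb"
            by (intro orb_f2) auto
          moreover have "1 / (2 - real (2*p-q) / real p) = real p / real q"
            using pq' p0 False by (simp add: field_simps of_nat_diff)
          ultimately show ?thesis by metis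
        qed
      qed
    qed
  qed
qed

lemma orb_shift_nat: "y \<in> orb \<Longrightarrow> y + real n \<in> orb \<and> y - real n \<in> orb"
proof (induction n)
  case 0 then show ?case by simp
next
  case (Suc n)
  then have "y + real n + 1 \<in> orb" "y - real n - 1 \<in> orb"
    using orb_plus orb_minus by auto
  then show ?case by (simp add: algebra_simps)
qed

lemma orb_shift: "y \<in> orb \<Longrightarrow> y + real_of_int m \<in> orb"
proof (cases "m \<ge> 0")
  case True
  assume "y \<in> orb"
  then show ?thesis using orb_shift_nat[of y "nat m"] True by simp
next
  case False
  assume "y \<in> orb"
  then have "y - real (nat (-m)) \<in> orb" using orb_shift_nat by blast
  then show ?thesis using False by simp
qed

lemma orb_dense: "x < y \<Longrightarrow> \<exists>d\<in>orb. x < d \<and> d < y"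
proof -
  assume xy: "x < y"
  obtain q :: nat where q0: "inverse (real (Suc q)) < y - x"
    using xy reals_Archimedean[of "y - x"] by auto
  then have q: "1 / real (Suc q) < y - x" by (simp add: inverse_eq_divide)
  define Q where "Q = Suc q"
  have Q0: "0 < Q" by (simp add: Q_def)
  have qQ: "1 / real Q < y - x" using q by (simp add: Q_def)
  define p where "p = \<lfloor>x * Q\<rfloor> + 1"
  have p1: "x * Q < p" unfolding p_def by linarith
  have p2: "p \<le> x * Q + 1" unfolding p_def by linarith
  have d1: "x < p / Q" using p1 Q0 by (simp add: field_simps)
  have "p / Q \<le> x + 1 / Q" using p2 Q0 by (simp add: field_simps)
  then have d2: "p / Q < y" using qQ by simp
  define m where "m = p div int Q"
  define r where "r = p mod int Q"
  have r0: "0 \<le> r" "r < int Q" using Q0 by (auto simp: r_def)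
  have pe: "p = m * int Q + r" by (simp add: m_def r_def)
  have "real (nat r) / real Q \<in> orb"
  proof -
    have "nat r \<le> Q" using r0 by simp
    then show ?thesis using orb_rat[of Q] Q0 by blast
  qed
  then have "real (nat r) / real Q + real_of_int m \<in> orb" by (rule orb_shift)
  moreover have "real (nat r) / real Q + real_of_int m = p / Q"
    using pe r0 Q0 by (simp add: field_simps)
  ultimately show ?thesis using d1 d2 by metis
qed

lemma gb_fix: "gb u = u \<Longrightarrow> u \<le> 0"
proof (rule ccontr)
  assume e: "gb u = u" and "\<not> u \<le> 0"
  then have u: "u > 0" by simp
  consider "u \<le> 1/2" | "1/2 < u" "u \<le> 1" | "1 < u" by linarith
  then show False
  proof cases
    case 1
    then have "u / (1 - u) = u" using e u by (simp add: gb_def)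
    then have "u = u * (1 - u)" using 1 by (simp add: field_simps)
    then have "u * u = 0" by (simp add: algebra_simps)
    then show False using u by simp
  next
    case 2
    then have "(3*u - 1) / u = u" using e u by (simp add: gb_def)
    then have "3*u - 1 = u * u" using u by (simp add: field_simps)
    moreover have "u * u \<le> u" using 2 u by (simp add: mult_le_cancel_left1)
    ultimately show False using 2 by linarith
  next
    case 3 then show False using e by (simp add: gb_def)
  qed
qed

lemma gb_shift: "gb v = v + 1 \<Longrightarrow> 1 \<le> v"
proof (rule ccontr)
  assume e: "gb v = v + 1" and "\<not> 1 \<le> v"
  then have v: "v < 1" by simp
  consider "v \<le> 0" | "0 < v" "v \<le> 1/2" | "1/2 < v" by linarith
  then show False
  proof cases
    case 1 then show False using e by (simp add: gb_def)
  next
    case 2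
    then have "v / (1 - v) = v + 1" using e by (simp add: gb_def)
    moreover have "v / (1 - v) \<le> 1" using 2 by (simp add: field_simps)
    ultimately show False using 2 by linarith
  next
    case 3
    then have "(3*v - 1) / v = v + 1" using e v by (simp add: gb_def)
    then have "3*v - 1 = (v+1) * v" using 3 by (simp add: field_simps)
    then have "(v - 1) * (v - 1) = 0" by (simp add: algebra_simps)
    then show False using v by simp
  qed
qed

lemma gen_in: "s \<in> {ga, gb, gc} \<Longrightarrow> s \<in> G0"
  using G0_gen[OF G0_id] by fastforce

theorem mainTheorem7:
  shows "center_G0 = {id}"
proof
  show "{id} \<subseteq> center_G0" unfolding center_G0_def using G0_id by auto
next
  show "center_G0 \<subseteq> {id}"
  proof
    fix g assume "g \<in> center_G0"
    then have gG: "g \<in> G0" and cm: "\<And>h. h \<in> G0 \<Longrightarrow> g \<circ> h = h \<circ> g"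
      unfolding center_G0_def by auto
    have cp: "g (h t) = h (g t)" if "h \<in> G0" for h t
      using cm[OF that] by (metis comp_apply)
    have e1: "gb (g 0) = g 0" using cp[OF gen_in, of gb 0] by (simp add: gb_def)
    have g0le: "g 0 \<le> 0" using gb_fix e1 by blast
    have ga1: "g 1 = g 0 + 1" using cp[OF gen_in, of ga 0] by (simp add: ga_def)
    have e2: "gb (g 1) = g 1 + 1" using cp[OF gen_in, of gb 1] ga1
      cp[OF gen_in, of ga 1] by (simp add: gb_def ga_def)
    have "g 1 \<ge> 1" using gb_shift e2 by blast
    then have g0: "g 0 = 0" using g0le ga1 by simp
    have fx: "g d = d" if "d \<in> orb" for d
      using that unfolding orb_def using cp g0 by auto
    have "g x = x" for x
    proof (rule ccontr)
      assume "g x \<noteq> x"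
      then consider "x < g x" | "g x < x" by linarith
      then show False
      proof cases
        case 1
        then obtain d where "d \<in> orb" "x < d" "d < g x" using orb_dense by blast
        then show False using fx G0_mono[OF gG, of x d] by simp
      next
        case 2
        then obtain d where "d \<in> orb" "g x < d" "d < x" using orb_dense by blast
        then show False using fx G0_mono[OF gG, of d x] by simp
      qed
    qed
    then show "g \<in> {id}" by auto
  qed
qed

end
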